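(* Let $f:\mathbb{R}^d\to\mathbb{R}$ be twice differentiable, $m$-strongly convex and $L$-smooth ($0<m\le L$), with unique minimizer $x_\star$. Let $(\mathcal{G}_k)_{k\ge 0}$ be a filtration and, for each $k\ge 0$, let $\varepsilon_{k+1}(\cdot)$ be a $\mathcal{G}_{k+1}$-measurable random field on $\mathbb{R}^d$ with values in $\mathbb{R}^d$ such that $\mathbb{E}[\varepsilon_{k+1}(\zeta)\mid\mathcal{G}_k]=0$ for every $\zeta$, the fields $\{\varepsilon_k\}_{k>0}$ being independent and identically distributed. Let $a_k>0$ and $A_k=\sum_{i=1}^k a_i$. For $k\ge1$ set $\phi_k(x)=\sum_{i=1}^k\frac{a_i m}{2}\|x-x_i\|^2$, so that its convex conjugate satisfies $\nabla\phi_k^\star(z)=\dfrac{z+m\sum_{i=1}^k a_ix_i}{A_km}$. Let $(x_k,y_k,z_k)_{k\ge1}$ be iterates of the implicit accelerated dual averaging method, i.e. (with $x_k$ $\mathcal{G}_k$-measurable) for all $k\ge1$, $$x_k=\frac{A_{k-1}}{A_k}y_{k-1}+\frac{a_k}{A_k}\nabla\phi_k^\star(z_{k-1}),\quad \omega_k=\nabla f(x_k)+\varepsilon_{k+1}(x_k),\quad z_k=z_{k-1}-a_k\omega_k,\quad y_k=\frac{A_{k-1}}{A_k}y_{k-1}+\frac{a_k}{A_k}\nabla\phi_k^\star(z_k).$$ Define $U_k=f(y_k)$, $$L_k=\frac{1}{A_k}\Big[\sum_{i=1}^k a_i\big(f(x_i)-\varepsilon_{i+1}(x_i)^\top(x_\star-x_i)\big)+\min_x\sum_{i=1}^k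 a_i\Big(\omega_i^\top(x-x_i)+\frac m2\|x-x_i\|^2\Big)\Big],$$ and $G_k=U_k-L_k$. Writing $\gamma_k=a_k/A_k$, for every $k\ge2$, $$\mathbb{E}[G_k]\le(1-\gamma_k)\mathbb{E}[G_{k-1}]-m_k\,\mathbb{E}\|\nabla f(x_k)\|^2+n_k\,\mathbb{E}\|\varepsilon_{k+1}(x_k)\|^2,$$ where $m_k=\Big(\frac m2-\frac{\gamma_k^2L}{2}\Big)\frac{\gamma_k^2}{m^2}$ and $n_k=\frac{\gamma_k^2}{m}-\Big(\frac m2-\frac{\gamma_k^2L}{2}\Big)\frac{\gamma_k^2}{m^2}$.
   Context: $\|\cdot\|$ is the Euclidean norm. A function is $m$-strongly convex and $L$-smooth if $f(x)+\nabla f(x)^\top(y-x)+\frac m2\|y-x\|^2\le f(y)\le f(x)+\nabla f(x)^\top(y-x)+\frac L2\|y-x\|^2$ for all $x,y$. The convex conjugate is $\psi^\star(z)=\max_x\{z^\top x-\psi(x)\}$. The paper phrases this result as: with $m_0=0$ the method has the "property of robustness" $\mathbb{E}[\mathcal{E}_{k+1}]\le(1-r_k)\mathbb{E}[\mathcal{E}_k]-m_k\mathbb{E}\|\nabla f(\zeta_k)\|^2+n_k\mathbb{E}\|\varepsilon_{k+1}(\zeta_k)\|^2$ with $\mathcal{E}_k=G_k$, $r_k=a_k/A_k$. *)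

theory Defs
  imports "HOL-Analysis.Analysis" "HOL-Probability.Probability"
begin

definition cumw :: "(nat \<Rightarrow> real) \<Rightarrow> nat \<Rightarrow> real" where
  "cumw a k = (\<Sum>i=1..k. a i)"

definition phi :: "real \<Rightarrow> (nat \<Rightarrow> real) \<Rightarrow> (nat \<Rightarrow> 'v::real_inner) \<Rightarrow> nat \<Rightarrow> 'v \<Rightarrow> real" where
  "phi m a xs k x = (\<Sum>i=1..k. a i * m / 2 * (norm (x - xs i))\<^sup>2)"

text \<open>The gradient of the convex conjugate of phi_k, by the explicit formula stated in
  the paper: (z + m sum_{i=1}^k a_i x_i) / (A_k m).\<close>
definition phi_conj_grad :: "real \<Rightarrow> (nat \<Rightarrow> real) \<Rightarrow> (nat \<Rightarrow> 'v::real_vector) \<Rightarrow> nat \<Rightarrow> 'v \<Rightarrow> 'v" where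
  "phi_conj_grad m a xs k z = (1 / (cumw a k * m)) *\<^sub>R (z + m *\<^sub>R (\<Sum>i=1..k. a i *\<^sub>R xs i))"

definition strongly_convex_smooth ::
  "real \<Rightarrow> real \<Rightarrow> ('v::real_inner \<Rightarrow> real) \<Rightarrow> ('v \<Rightarrow> 'v) \<Rightarrow> bool" where
  "strongly_convex_smooth m L f df \<longleftrightarrow>
     (\<forall>x y. f x + df x \<bullet> (y - x) + m / 2 * (norm (y - x))\<^sup>2 \<le> f y \<and>
            f y \<le> f x + df x \<bullet> (y - x) + L / 2 * (norm (y - x))\<^sup>2)"

end

theory Submission
  imports Defs
begin

lemma key_alg:
  fixes g e d s :: "'v::real_inner" and \<gamma> m L fyk fy0 fx P0 P1 S0 S1 :: real
  assumes m: "0 < m" and g0: "0 \<le> \<gamma>" and g1: "\<gamma> \<le> 1"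
    and up: "fyk \<le> fx + g \<bullet> (- (\<gamma>\<^sup>2 / m) *\<^sub>R (g + e)) + L / 2 * (norm (- (\<gamma>\<^sup>2 / m) *\<^sub>R (g + e)))\<^sup>2"
    and lo: "fx + g \<bullet> (- \<gamma> *\<^sub>R d) \<le> fy0"
    and P: "P1 = (1 - \<gamma>) * P0 + (1 - \<gamma>) * (m / 2) * (norm (- \<gamma> *\<^sub>R d - (\<gamma> / m) *\<^sub>R (g + e)))\<^sup>2
              + \<gamma> * ((g + e) \<bullet> ((1 - \<gamma>) *\<^sub>R d - (\<gamma> / m) *\<^sub>R (g + e))
                     + m / 2 * (norm ((1 - \<gamma>) *\<^sub>R d - (\<gamma> / m) *\<^sub>R (g + e)))\<^sup>2)"
    and S: "S1 = (1 - \<gamma>) * S0 + \<gamma> * (fx - e \<bullet> s)"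
  shows "fyk - (S1 + P1) \<le> (1 - \<gamma>) * (fy0 - (S0 + P0))
           - (m / 2 - \<gamma>\<^sup>2 * L / 2) * \<gamma>\<^sup>2 / m\<^sup>2 * (norm g)\<^sup>2
           + (\<gamma>\<^sup>2 / m - (m / 2 - \<gamma>\<^sup>2 * L / 2) * \<gamma>\<^sup>2 / m\<^sup>2) * (norm e)\<^sup>2
           + e \<bullet> (\<gamma> *\<^sub>R s - (\<gamma> * (1 - \<gamma>)) *\<^sub>R d + (L * \<gamma> ^ 4 / m\<^sup>2) *\<^sub>R g)"
proof -
  define gg where "gg = g \<bullet> g"
  define ge where "ge = g \<bullet> e"
  define ee where "ee = e \<bullet> e"
  define gd where "gd = g \<bullet> d"
  define ed where "ed = e \<bullet> d"
  define dd where "dd = d \<bullet> d"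
  define es where "es = e \<bullet> s"
  have n1: "(norm (- (\<gamma>\<^sup>2 / m) *\<^sub>R (g + e)))\<^sup>2 = (\<gamma>\<^sup>2 / m)\<^sup>2 * (gg + 2 * ge + ee)"
  proof -
    have "(norm (g + e))\<^sup>2 = gg + 2 * ge + ee"
      unfolding power2_norm_eq_inner gg_def ge_def ee_def
      by (simp add: inner_add_left inner_add_right inner_commute)
    then show ?thesis using m by (simp add: power_mult_distrib power_divide)
  qed
  have n2: "(norm (- \<gamma> *\<^sub>R d - (\<gamma> / m) *\<^sub>R (g + e)))\<^sup>2 = \<gamma>\<^sup>2 * dd + 2 * \<gamma> * (\<gamma> / m) * (gd + ed) + (\<gamma> / m)\<^sup>2 * (gg + 2 * ge + ee)"
    unfolding power2_norm_eq_inner gg_def ge_def ee_def gd_def ed_def dd_def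
    by (simp add: inner_add_left inner_add_right inner_diff_left inner_diff_right inner_commute power2_eq_square algebra_simps add_divide_distrib)
  have n3: "(norm ((1 - \<gamma>) *\<^sub>R d - (\<gamma> / m) *\<^sub>R (g + e)))\<^sup>2 = (1 - \<gamma>)\<^sup>2 * dd - 2 * (1 - \<gamma>) * (\<gamma> / m) * (gd + ed) + (\<gamma> / m)\<^sup>2 * (gg + 2 * ge + ee)"
    unfolding power2_norm_eq_inner gg_def ge_def ee_def gd_def ed_def dd_def
    by (simp add: inner_add_left inner_add_right inner_diff_left inner_diff_right inner_commute power2_eq_square algebra_simps add_divide_distrib)
  have i1: "(g + e) \<bullet> ((1 - \<gamma>) *\<^sub>R d - (\<gamma> / m) *\<^sub>R (g + e)) = (1 - \<gamma>) * (gd + ed) - (\<gamma> / m) * (gg + 2 * ge + ee)"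
    unfolding gg_def ge_def ee_def gd_def ed_def dd_def
    by (simp add: inner_add_left inner_add_right inner_diff_left inner_diff_right inner_commute algebra_simps)
  have i2: "g \<bullet> (- (\<gamma>\<^sup>2 / m) *\<^sub>R (g + e)) = - (\<gamma>\<^sup>2 / m) * (gg + ge)"
    unfolding gg_def ge_def by (simp add: inner_add_right algebra_simps add_divide_distrib)
  have i3: "g \<bullet> (- \<gamma> *\<^sub>R d) = - \<gamma> * gd" unfolding gd_def by simp
  have i4: "e \<bullet> (\<gamma> *\<^sub>R s - (\<gamma> * (1 - \<gamma>)) *\<^sub>R d + (L * \<gamma> ^ 4 / m\<^sup>2) *\<^sub>R g) = \<gamma> * es - \<gamma> * (1 - \<gamma>) * ed + (L * \<gamma> ^ 4 / m\<^sup>2) * ge"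
    unfolding es_def ed_def ge_def by (simp add: inner_add_right inner_diff_right inner_commute)
  have ng: "(norm g)\<^sup>2 = gg" "(norm e)\<^sup>2 = ee" unfolding gg_def ee_def by (simp_all add: power2_norm_eq_inner)
  have dd0: "0 \<le> dd" unfolding dd_def by simp
  have slack: "0 \<le> m / 2 * \<gamma> * (1 - \<gamma>) * dd" using m g0 g1 dd0 by simp
  have "fyk - (S1 + P1) - ((1 - \<gamma>) * (fy0 - (S0 + P0))
           - (m / 2 - \<gamma>\<^sup>2 * L / 2) * \<gamma>\<^sup>2 / m\<^sup>2 * gg
           + (\<gamma>\<^sup>2 / m - (m / 2 - \<gamma>\<^sup>2 * L / 2) * \<gamma>\<^sup>2 / m\<^sup>2) * ee
           + (\<gamma> * es - \<gamma> * (1 - \<gamma>) * ed + (L * \<gamma> ^ 4 / m\<^sup>2) * ge))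
        \<le> (fx + (- (\<gamma>\<^sup>2 / m) * (gg + ge)) + L / 2 * ((\<gamma>\<^sup>2 / m)\<^sup>2 * (gg + 2 * ge + ee)))
           - ((1 - \<gamma>) * S0 + \<gamma> * (fx - es))
           - ((1 - \<gamma>) * P0 + (1 - \<gamma>) * (m / 2) * (\<gamma>\<^sup>2 * dd + 2 * \<gamma> * (\<gamma> / m) * (gd + ed) + (\<gamma> / m)\<^sup>2 * (gg + 2 * ge + ee))
              + \<gamma> * (((1 - \<gamma>) * (gd + ed) - (\<gamma> / m) * (gg + 2 * ge + ee))
                     + m / 2 * ((1 - \<gamma>)\<^sup>2 * dd - 2 * (1 - \<gamma>) * (\<gamma> / m) * (gd + ed) + (\<gamma> / m)\<^sup>2 * (gg + 2 * ge + ee))))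
           - ((1 - \<gamma>) * ((fx + (- \<gamma> * gd)) - (S0 + P0))
           - (m / 2 - \<gamma>\<^sup>2 * L / 2) * \<gamma>\<^sup>2 / m\<^sup>2 * gg
           + (\<gamma>\<^sup>2 / m - (m / 2 - \<gamma>\<^sup>2 * L / 2) * \<gamma>\<^sup>2 / m\<^sup>2) * ee
           + (\<gamma> * es - \<gamma> * (1 - \<gamma>) * ed + (L * \<gamma> ^ 4 / m\<^sup>2) * ge))"
    using up lo g1 unfolding P S n1 n2 n3 i1 i2 i3 es_def[symmetric]
    by (smt (verit) mult_left_mono)
  also have "\<dots> = - (m / 2 * \<gamma> * (1 - \<gamma>) * dd)"
    using m by (simp add: field_simps power2_eq_square eval_nat_numeral)
  finally show ?thesis unfolding i4 ng using slack by linarith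
qed

lemma norm_add_sq: "(norm (p + q))\<^sup>2 = (norm p)\<^sup>2 + 2 * (p \<bullet> q) + (norm (q::'v::real_inner))\<^sup>2"
  by (simp add: power2_norm_eq_inner inner_add_left inner_add_right inner_commute)

lemma psi_identity:
  fixes X W :: "nat \<Rightarrow> 'v::real_inner" and a :: "nat \<Rightarrow> real" and I :: "nat set"
  assumes fin: "finite I" and A: "sum a I \<noteq> 0" and m: "m \<noteq> 0"
  shows "(\<Sum>i\<in>I. a i * (W i \<bullet> (u - X i) + m / 2 * (norm (u - X i))\<^sup>2))
       = (\<Sum>i\<in>I. a i * (W i \<bullet> ((1 / (sum a I * m)) *\<^sub>R (m *\<^sub>R (\<Sum>i\<in>I. a i *\<^sub>R X i) - (\<Sum>i\<in>I. a i *\<^sub>R W i)) - X i)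
             + m / 2 * (norm ((1 / (sum a I * m)) *\<^sub>R (m *\<^sub>R (\<Sum>i\<in>I. a i *\<^sub>R X i) - (\<Sum>i\<in>I. a i *\<^sub>R W i)) - X i))\<^sup>2))
         + m * sum a I / 2 * (norm (u - (1 / (sum a I * m)) *\<^sub>R (m *\<^sub>R (\<Sum>i\<in>I. a i *\<^sub>R X i) - (\<Sum>i\<in>I. a i *\<^sub>R W i))))\<^sup>2"
    (is "?L = ?R")
proof -
  define v where "v = (1 / (sum a I * m)) *\<^sub>R (m *\<^sub>R (\<Sum>i\<in>I. a i *\<^sub>R X i) - (\<Sum>i\<in>I. a i *\<^sub>R W i))"
  have tw: "a i * (W i \<bullet> (u - X i) + m / 2 * (norm (u - X i))\<^sup>2)
      = a i * (W i \<bullet> (v - X i) + m / 2 * (norm (v - X i))\<^sup>2)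
        + (u - v) \<bullet> (a i *\<^sub>R W i + (a i * m) *\<^sub>R (v - X i)) + a i * m / 2 * (norm (u - v))\<^sup>2" for i
  proof -
    have e1: "(norm (u - X i))\<^sup>2 = (norm (u - v))\<^sup>2 + 2 * ((u - v) \<bullet> (v - X i)) + (norm (v - X i))\<^sup>2"
      using norm_add_sq[of "u - v" "v - X i"] by simp
    have e2: "W i \<bullet> (u - X i) = W i \<bullet> (v - X i) + (u - v) \<bullet> W i"
      by (simp add: inner_diff_right inner_commute)
    show ?thesis unfolding e1 e2 inner_add_right inner_scaleR_right
      by (simp add: algebra_simps del: inner_diff_left inner_diff_right)
  qed
  have z: "(\<Sum>i\<in>I. a i *\<^sub>R W i + (a i * m) *\<^sub>R (v - X i)) = 0"
  proof -
    have "(\<Sum>i\<in>I. a i *\<^sub>R W i + (a i * m) *\<^sub>R (v - X i))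
        = (\<Sum>i\<in>I. a i *\<^sub>R W i) + (sum a I * m) *\<^sub>R v - m *\<^sub>R (\<Sum>i\<in>I. a i *\<^sub>R X i)"
    proof -
      have "(\<Sum>i\<in>I. (a i * m) *\<^sub>R (v - X i)) = (\<Sum>i\<in>I. (a i * m) *\<^sub>R v) - (\<Sum>i\<in>I. (a i * m) *\<^sub>R X i)"
        by (simp add: scaleR_diff_right sum_subtractf)
      also have "(\<Sum>i\<in>I. (a i * m) *\<^sub>R v) = (sum a I * m) *\<^sub>R v"
        by (simp add: scaleR_sum_left sum_distrib_right)
      also have "(\<Sum>i\<in>I. (a i * m) *\<^sub>R X i) = m *\<^sub>R (\<Sum>i\<in>I. a i *\<^sub>R X i)"
        by (simp add: scaleR_sum_right mult.commute)
      finally show ?thesis by (simp add: sum.distrib)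
    qed
    also have "(sum a I * m) *\<^sub>R v = m *\<^sub>R (\<Sum>i\<in>I. a i *\<^sub>R X i) - (\<Sum>i\<in>I. a i *\<^sub>R W i)"
      unfolding v_def using A m by simp
    finally show ?thesis by simp
  qed
  have "?L = (\<Sum>i\<in>I. a i * (W i \<bullet> (v - X i) + m / 2 * (norm (v - X i))\<^sup>2))
        + (u - v) \<bullet> (\<Sum>i\<in>I. a i *\<^sub>R W i + (a i * m) *\<^sub>R (v - X i)) + (\<Sum>i\<in>I. a i * m / 2 * (norm (u - v))\<^sup>2)"
    unfolding tw sum.distrib inner_sum_right[symmetric] by simp
  also have "(\<Sum>i\<in>I. a i * m / 2 * (norm (u - v))\<^sup>2) = m * sum a I / 2 * (norm (u - v))\<^sup>2"
    by (simp add: sum_distrib_right[symmetric] sum_divide_distrib[symmetric] sum_distrib_left[symmetric] algebra_simps)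
  also have "(u - v) \<bullet> (\<Sum>i\<in>I. a i *\<^sub>R W i + (a i * m) *\<^sub>R (v - X i)) = 0" unfolding z by simp
  finally show ?thesis unfolding v_def by simp
qed

lemma sqh1: "(a + b)\<^sup>2 \<le> 2 * a\<^sup>2 + 2 * (b::real)\<^sup>2"
proof -
  have "0 \<le> (a - b)\<^sup>2" by simp
  then show ?thesis by (simp add: power2_sum power2_diff)
qed

lemma sqh2: "0 \<le> a \<Longrightarrow> 0 \<le> b \<Longrightarrow> a * b \<le> a\<^sup>2 + (b::real)\<^sup>2"
proof -
  assume "0 \<le> a" "0 \<le> b"
  then have "0 \<le> a * b" by simp
  moreover have "0 \<le> (a - b)\<^sup>2" by simp
  ultimately show ?thesis by (simp add: power2_diff)
qed

lemma sqh3: "(a::real) \<le> 1 + a\<^sup>2"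
proof -
  have "0 \<le> (a - 1/2)\<^sup>2" by simp
  then show ?thesis by (simp add: power2_diff power2_eq_square field_simps)
qed

definition L2 :: "'a measure \<Rightarrow> ('a \<Rightarrow> 'v::{real_normed_vector, second_countable_topology}) \<Rightarrow> bool" where
  "L2 M g \<longleftrightarrow> g \<in> borel_measurable M \<and> integrable M (\<lambda>w. (norm (g w))\<^sup>2)"

lemma L2I: "g \<in> borel_measurable M \<Longrightarrow> integrable M (\<lambda>w. (norm (g w))\<^sup>2) \<Longrightarrow> L2 M g"
  by (simp add: L2_def)

lemma L2_meas: "L2 M g \<Longrightarrow> g \<in> borel_measurable M" by (simp add: L2_def)
lemma L2_int2: "L2 M g \<Longrightarrow> integrable M (\<lambda>w. (norm (g w))\<^sup>2)" by (simp add: L2_def)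

lemma L2_const: "finite_measure M \<Longrightarrow> L2 M (\<lambda>w. c)"
  by (simp add: L2_def finite_measure.integrable_const)

lemma L2_add:
  fixes g h :: "'a \<Rightarrow> 'v::{real_normed_vector, second_countable_topology}"
  assumes "L2 M g" "L2 M h" shows "L2 M (\<lambda>w. g w + h w)"
proof (rule L2I)
  have [measurable]: "g \<in> borel_measurable M" "h \<in> borel_measurable M" using assms by (simp_all add: L2_def)
  show m: "(\<lambda>w. g w + h w) \<in> borel_measurable M" by measurable
  have i: "integrable M (\<lambda>w. 2 * (norm (g w))\<^sup>2 + 2 * (norm (h w))\<^sup>2)" using assms by (simp add: L2_def)
  show "integrable M (\<lambda>w. (norm (g w + h w))\<^sup>2)"
  proof (rule Bochner_Integration.integrable_bound[OF i])
    show "(\<lambda>w. (norm (g w + h w))\<^sup>2) \<in> borel_measurable M" using m by measurable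
    show "AE w in M. norm ((norm (g w + h w))\<^sup>2) \<le> norm (2 * (norm (g w))\<^sup>2 + 2 * (norm (h w))\<^sup>2)"
    proof (intro AE_I2)
      fix w
      have "norm (g w + h w) \<le> norm (g w) + norm (h w)" by (rule norm_triangle_ineq)
      then have "(norm (g w + h w))\<^sup>2 \<le> (norm (g w) + norm (h w))\<^sup>2" by (simp add: power_mono)
      also have "\<dots> \<le> 2 * (norm (g w))\<^sup>2 + 2 * (norm (h w))\<^sup>2"
        by (rule sqh1)
      finally show "norm ((norm (g w + h w))\<^sup>2) \<le> norm (2 * (norm (g w))\<^sup>2 + 2 * (norm (h w))\<^sup>2)" by simp
    qed
  qed
qed

lemma L2_scaleR:
  fixes g :: "'a \<Rightarrow> 'v::{real_normed_vector, second_countable_topology}"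
  assumes "L2 M g" shows "L2 M (\<lambda>w. c *\<^sub>R g w)"
  using assms by (simp add: L2_def power_mult_distrib borel_measurable_scaleR)

lemma L2_uminus:
  fixes g :: "'a \<Rightarrow> 'v::{real_normed_vector, second_countable_topology}"
  assumes "L2 M g" shows "L2 M (\<lambda>w. - g w)"
  using assms by (simp add: L2_def)

lemma L2_diff:
  fixes g h :: "'a \<Rightarrow> 'v::{real_normed_vector, second_countable_topology}"
  assumes "L2 M g" "L2 M h" shows "L2 M (\<lambda>w. g w - h w)"
  using L2_add[OF assms(1) L2_uminus[OF assms(2)]] by simp

lemma L2_sum:
  fixes g :: "nat \<Rightarrow> 'a \<Rightarrow> 'v::{real_normed_vector, second_countable_topology}"
  assumes fm: "finite_measure M" and "\<And>i. i \<in> I \<Longrightarrow> L2 M (g i)" shows "L2 M (\<lambda>w. \<Sum>i\<in>I. g i w)"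
  using assms(2)
proof (induction I rule: infinite_finite_induct)
  case (infinite A) then show ?case using L2_const[OF fm] by simp
next
  case empty then show ?case using L2_const[OF fm] by simp
next
  case (insert i F) then show ?case by (simp add: L2_add)
qed

lemma L2_inner:
  fixes g h :: "'a \<Rightarrow> 'v::{real_inner, second_countable_topology}"
  assumes "L2 M g" "L2 M h" shows "integrable M (\<lambda>w. g w \<bullet> h w)"
proof -
  have i: "integrable M (\<lambda>w. (norm (g w))\<^sup>2 + (norm (h w))\<^sup>2)" using assms by (simp add: L2_def)
  show ?thesis
  proof (rule Bochner_Integration.integrable_bound[OF i])
    show "(\<lambda>w. g w \<bullet> h w) \<in> borel_measurable M" using assms by (simp add: L2_def borel_measurable_inner)
    show "AE w in M. norm (g w \<bullet> h w) \<le> norm ((norm (g w))\<^sup>2 + (norm (h w))\<^sup>2)"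
    proof (intro AE_I2)
      fix w
      have "\<bar>g w \<bullet> h w\<bar> \<le> norm (g w) * norm (h w)" by (rule Cauchy_Schwarz_ineq2)
      also have "\<dots> \<le> (norm (g w))\<^sup>2 + (norm (h w))\<^sup>2"
        by (rule sqh2) simp_all
      finally show "norm (g w \<bullet> h w) \<le> norm ((norm (g w))\<^sup>2 + (norm (h w))\<^sup>2)" by simp
    qed
  qed
qed

lemma L2_integrable:
  fixes g :: "'a \<Rightarrow> 'v::{banach, second_countable_topology}"
  assumes fm: "finite_measure M" and "L2 M g" shows "integrable M g"
proof -
  have i: "integrable M (\<lambda>w. 1 + (norm (g w))\<^sup>2)" using assms by (simp add: L2_def finite_measure.integrable_const)
  show ?thesis
  proof (rule Bochner_Integration.integrable_bound[OF i])
    show "g \<in> borel_measurable M" using assms by (simp add: L2_def)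
    show "AE w in M. norm (g w) \<le> norm (1 + (norm (g w))\<^sup>2)"
    proof (intro AE_I2)
      fix w
      have "norm (g w) \<le> 1 + (norm (g w))\<^sup>2"
        by (rule sqh3)
      then show "norm (g w) \<le> norm (1 + (norm (g w))\<^sup>2)" by simp
    qed
  qed
qed

lemma L2_bound:
  fixes g :: "'a \<Rightarrow> 'v::{real_normed_vector, second_countable_topology}"
    and h :: "'a \<Rightarrow> 'u::{real_normed_vector, second_countable_topology}"
  assumes "L2 M g" "h \<in> borel_measurable M" "\<And>w. w \<in> space M \<Longrightarrow> norm (h w) \<le> c * norm (g w)"
  shows "L2 M h"
proof (rule L2I[OF assms(2)])
  have i: "integrable M (\<lambda>w. c\<^sup>2 * (norm (g w))\<^sup>2)" using assms by (simp add: L2_def)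
  show "integrable M (\<lambda>w. (norm (h w))\<^sup>2)"
  proof (rule Bochner_Integration.integrable_bound[OF i])
    show "(\<lambda>w. (norm (h w))\<^sup>2) \<in> borel_measurable M" using assms(2) by measurable
    show "AE w in M. norm ((norm (h w))\<^sup>2) \<le> norm (c\<^sup>2 * (norm (g w))\<^sup>2)"
    proof (rule AE_I2)
      fix w assume w: "w \<in> space M"
      have "norm (h w) \<le> c * norm (g w)" using assms(3)[OF w] .
      then have "(norm (h w))\<^sup>2 \<le> (c * norm (g w))\<^sup>2" by (simp add: power_mono)
      then show "norm ((norm (h w))\<^sup>2) \<le> norm (c\<^sup>2 * (norm (g w))\<^sup>2)" by (simp add: power_mult_distrib)
    qed
  qed
qed

lemma L2_nth:
  fixes g :: "'a \<Rightarrow> real^'n"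
  assumes "L2 M g" shows "L2 M (\<lambda>w. g w $ i)"
proof (rule L2_bound[OF assms, where c = 1])
  show "(\<lambda>w. g w $ i) \<in> borel_measurable M" using assms unfolding L2_def
    by (intro borel_measurable_continuous_on[where f="\<lambda>v. v $ i"] continuous_on_component continuous_on_id) auto
  show "norm (g w $ i) \<le> 1 * norm (g w)" for w using component_le_norm_cart by simp
qed

lemma grad_bound:
  fixes f :: "'v::real_inner \<Rightarrow> real" and df :: "'v \<Rightarrow> 'v"
  assumes sc: "strongly_convex_smooth m L f df" and xmin: "\<And>u. f xs \<le> f u" and L: "0 < L"
  shows "norm (df u) \<le> L * norm (u - xs)"
proof -
  have up: "f q \<le> f p + df p \<bullet> (q - p) + L / 2 * (norm (q - p))\<^sup>2" for p q
    using sc unfolding strongly_convex_smooth_def by blast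
  have step: "f xs \<le> f p - (norm (df p))\<^sup>2 / (2 * L)" for p
  proof -
    have "f xs \<le> f (p - (1 / L) *\<^sub>R df p)" by (rule xmin)
    also have "\<dots> \<le> f p + df p \<bullet> (- (1 / L) *\<^sub>R df p) + L / 2 * (norm (- (1 / L) *\<^sub>R df p))\<^sup>2"
      using up[where p=p and q="p - (1 / L) *\<^sub>R df p"] by simp
    also have "\<dots> = f p - (norm (df p))\<^sup>2 / (2 * L)"
      using L by (simp add: power2_norm_eq_inner[symmetric] power_mult_distrib power2_eq_square field_simps)
    finally show ?thesis .
  qed
  have d0: "df xs = 0" using step[of xs] L
    by (smt (verit) divide_pos_pos zero_less_norm_iff zero_less_power)
  have "f u \<le> f xs + L / 2 * (norm (u - xs))\<^sup>2" using up[where p=xs and q=u] d0 by simp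
  with step[of u] have "(norm (df u))\<^sup>2 / (2 * L) \<le> L / 2 * (norm (u - xs))\<^sup>2" by linarith
  then have "(norm (df u))\<^sup>2 \<le> (L * norm (u - xs))\<^sup>2"
    using L by (simp add: field_simps power_mult_distrib power2_eq_square)
  then show ?thesis using L by (simp add: power2_le_iff_abs_le)
qed

lemma psi_inf:
  fixes X W :: "nat \<Rightarrow> 'v::real_inner" and a :: "nat \<Rightarrow> real" and I :: "nat set"
  assumes fin: "finite I" and A: "sum a I > 0" and m: "m > 0"
    and V: "V = (1 / (sum a I * m)) *\<^sub>R (m *\<^sub>R (\<Sum>i\<in>I. a i *\<^sub>R X i) - (\<Sum>i\<in>I. a i *\<^sub>R W i))"
  shows "(INF u. \<Sum>i\<in>I. a i * (W i \<bullet> (u - X i) + m / 2 * (norm (u - X i))\<^sup>2))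
       = (\<Sum>i\<in>I. a i * (W i \<bullet> (V - X i) + m / 2 * (norm (V - X i))\<^sup>2))"
proof -
  define psi where "psi u = (\<Sum>i\<in>I. a i * (W i \<bullet> (u - X i) + m / 2 * (norm (u - X i))\<^sup>2))" for u
  have id: "psi u = psi V + m * sum a I / 2 * (norm (u - V))\<^sup>2" for u
    unfolding psi_def V using psi_identity[OF fin, of a m W u X] A m by simp
  have "Inf (range psi) = psi V"
  proof (rule cInf_eq_minimum)
    show "psi V \<in> range psi" by simp
    fix y assume "y \<in> range psi"
    then obtain u where u: "y = psi u" by blast
    have "0 \<le> m * sum a I / 2 * (norm (u - V))\<^sup>2" using A m by simp
    then show "psi V \<le> y" using id[of u] u by linarith
  qed
  then show ?thesis unfolding psi_def by simp
qed


theorem theorem2: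
  fixes M :: "'a measure"
    and F :: "nat \<Rightarrow> 'a measure"
    and f :: "real^'d \<Rightarrow> real"
    and df :: "real^'d \<Rightarrow> real^'d"
    and m L :: real
    and xs :: "real^'d"
    and eps :: "nat \<Rightarrow> 'a \<Rightarrow> real^'d \<Rightarrow> real^'d"
    and a :: "nat \<Rightarrow> real"
    and x y z :: "nat \<Rightarrow> 'a \<Rightarrow> real^'d"
    and k :: nat
  assumes P: "prob_space M"
    and filt: "filtration (space M) F"
    and sub: "\<And>j. subalgebra M (F j)"
    \<comment> \<open>f twice differentiable with gradient df\<close>
    and grad: "\<And>u. (f has_derivative (\<lambda>h. df u \<bullet> h)) (at u)"
    and twice: "\<And>u. df differentiable (at u)"
    and mL: "0 < m" "m \<le> L"
    and sc: "strongly_convex_smooth m L f df"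
    and xmin: "\<And>u. f xs \<le> f u"
    \<comment> \<open>noise: G_{j+1}-measurable random fields (jointly measurable in (omega, zeta))\<close>
    and eps_meas: "\<And>j. (\<lambda>(\<omega>, \<zeta>). eps (Suc j) \<omega> \<zeta>) \<in> borel_measurable (F (Suc j) \<Otimes>\<^sub>M borel)"
    and eps_int: "\<And>j \<zeta>. integrable M (\<lambda>\<omega>. eps (Suc j) \<omega> \<zeta>)"
    \<comment> \<open>conditional mean zero, E[eps_{j+1}(zeta) | G_j] = 0, for every (G_j-measurable) zeta\<close>
    and eps_mean0: "\<And>j \<zeta> i. \<zeta> \<in> borel_measurable (F j) \<Longrightarrow>
         integrable M (\<lambda>\<omega>. eps (Suc j) \<omega> (\<zeta> \<omega>)) \<Longrightarrow>
         AE \<omega> in M. real_cond_exp M (F j) (\<lambda>\<omega>. eps (Suc j) \<omega> (\<zeta> \<omega>) $ i) \<omega> = 0"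
    \<comment> \<open>the fields eps_j, j > 0, are independent and identically distributed\<close>
    and eps_indep: "prob_space.indep_vars M (\<lambda>_. \<Pi>\<^sub>M _\<in>UNIV. (borel :: (real^'d) measure)) eps {1..}"
    and eps_ident: "\<And>j. j \<ge> 1 \<Longrightarrow>
         distr M (\<Pi>\<^sub>M _\<in>UNIV. (borel :: (real^'d) measure)) (eps j)
       = distr M (\<Pi>\<^sub>M _\<in>UNIV. (borel :: (real^'d) measure)) (eps 1)"
    \<comment> \<open>step sizes\<close>
    and a_pos: "\<And>j. j \<ge> 1 \<Longrightarrow> a j > 0"
    \<comment> \<open>implicit accelerated dual averaging iterates\<close>
    and x_meas: "\<And>j. j \<ge> 1 \<Longrightarrow> x j \<in> borel_measurable (F j)"
    and x_def: "\<And>j \<omega>. j \<ge> 1 \<Longrightarrow> \<omega> \<in> space M \<Longrightarrow>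
         x j \<omega> = (cumw a (j - 1) / cumw a j) *\<^sub>R y (j - 1) \<omega>
                + (a j / cumw a j) *\<^sub>R phi_conj_grad m a (\<lambda>i. x i \<omega>) j (z (j - 1) \<omega>)"
    and z_def: "\<And>j \<omega>. j \<ge> 1 \<Longrightarrow> \<omega> \<in> space M \<Longrightarrow>
         z j \<omega> = z (j - 1) \<omega> - a j *\<^sub>R (df (x j \<omega>) + eps (Suc j) \<omega> (x j \<omega>))"
    and y_def: "\<And>j \<omega>. j \<ge> 1 \<Longrightarrow> \<omega> \<in> space M \<Longrightarrow>
         y j \<omega> = (cumw a (j - 1) / cumw a j) *\<^sub>R y (j - 1) \<omega>
                + (a j / cumw a j) *\<^sub>R phi_conj_grad m a (\<lambda>i. x i \<omega>) j (z j \<omega>)"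
    \<comment> \<open>existence of the expectations involved (finite second moments)\<close>
    and x_L2: "\<And>j. j \<ge> 1 \<Longrightarrow> integrable M (\<lambda>\<omega>. (norm (x j \<omega>))\<^sup>2)"
    and y_L2: "\<And>j. j \<ge> 1 \<Longrightarrow> integrable M (\<lambda>\<omega>. (norm (y j \<omega>))\<^sup>2)"
    and z_L2: "\<And>j. j \<ge> 1 \<Longrightarrow> integrable M (\<lambda>\<omega>. (norm (z j \<omega>))\<^sup>2)"
    and epsx_L2: "\<And>j. j \<ge> 1 \<Longrightarrow> integrable M (\<lambda>\<omega>. (norm (eps (Suc j) \<omega> (x j \<omega>)))\<^sup>2)"
    and k2: "k \<ge> 2"
  shows
    "let A = cumw a;
         \<omega>v = (\<lambda>i \<omega>. df (x i \<omega>) + eps (Suc i) \<omega> (x i \<omega>));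
         U = (\<lambda>j \<omega>. f (y j \<omega>));
         Lo = (\<lambda>j \<omega>. (1 / A j) *
                 ((\<Sum>i=1..j. a i * (f (x i \<omega>) - eps (Suc i) \<omega> (x i \<omega>) \<bullet> (xs - x i \<omega>)))
                  + (INF u. \<Sum>i=1..j. a i * (\<omega>v i \<omega> \<bullet> (u - x i \<omega>) + m / 2 * (norm (u - x i \<omega>))\<^sup>2))));
         G = (\<lambda>j \<omega>. U j \<omega> - Lo j \<omega>);
         \<gamma> = a k / A k;
         mk = (m / 2 - \<gamma>\<^sup>2 * L / 2) * \<gamma>\<^sup>2 / m\<^sup>2;
         nk = \<gamma>\<^sup>2 / m - (m / 2 - \<gamma>\<^sup>2 * L / 2) * \<gamma>\<^sup>2 / m\<^sup>2
     in (\<integral>\<omega>. G k \<omega> \<partial>M)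
        \<le> (1 - \<gamma>) * (\<integral>\<omega>. G (k - 1) \<omega> \<partial>M)
           - mk * (\<integral>\<omega>. (norm (df (x k \<omega>)))\<^sup>2 \<partial>M)
           + nk * (\<integral>\<omega>. (norm (eps (Suc k) \<omega> (x k \<omega>)))\<^sup>2 \<partial>M)"
proof -
  interpret P: prob_space M by (rule P)
  have fm: "finite_measure M" by (rule P.finite_measure_axioms)
  have m0: "0 < m" and L0: "0 < L" using mL by auto
  define A where "A = cumw a"
  have A0: "A 0 = 0" unfolding A_def cumw_def by simp
  have AS: "A (Suc j) = A j + a (Suc j)" for j unfolding A_def cumw_def by simp
  have Apos: "0 < A j" if "1 \<le> j" for j
    unfolding A_def cumw_def using that a_pos by (intro sum_pos) auto
  have A1: "A 1 = a 1" unfolding A_def cumw_def by simp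
  define W where "W i w = df (x i w) + eps (Suc i) w (x i w)" for i w
  define E where "E i w = eps (Suc i) w (x i w)" for i w
  define SX where "SX j w = (\<Sum>i=1..j. a i *\<^sub>R x i w)" for j w
  define SW where "SW j w = (\<Sum>i=1..j. a i *\<^sub>R W i w)" for j w
  define V where "V j w = (1 / (A j * m)) *\<^sub>R (m *\<^sub>R SX j w - SW j w)" for j w
  define Psi where "Psi j w u = (\<Sum>i=1..j. a i * (W i w \<bullet> (u - x i w) + m / 2 * (norm (u - x i w))\<^sup>2))" for j w u
  define Sl where "Sl j w = (\<Sum>i=1..j. a i * (f (x i w) - E i w \<bullet> (xs - x i w)))" for j w
  define Gf where "Gf = (\<lambda>j w. f (y j w) - (1 / cumw a j) *
                 ((\<Sum>i=1..j. a i * (f (x i w) - eps (Suc i) w (x i w) \<bullet> (xs - x i w)))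
                  + (INF u. \<Sum>i=1..j. a i * ((df (x i w) + eps (Suc i) w (x i w)) \<bullet> (u - x i w) + m / 2 * (norm (u - x i w))\<^sup>2))))"
  define \<gamma> where "\<gamma> = a k / A k"
  define mk where "mk = (m / 2 - \<gamma>\<^sup>2 * L / 2) * \<gamma>\<^sup>2 / m\<^sup>2"
  define nk where "nk = \<gamma>\<^sup>2 / m - (m / 2 - \<gamma>\<^sup>2 * L / 2) * \<gamma>\<^sup>2 / m\<^sup>2"
  define H where "H w = \<gamma> *\<^sub>R (xs - x k w) - (\<gamma> * (1 - \<gamma>)) *\<^sub>R (V (k - 1) w - x k w) + (L * \<gamma> ^ 4 / m\<^sup>2) *\<^sub>R df (x k w)" for w
  define k' where "k' = k - 1"
  have kk: "k = Suc k'" and k1: "1 \<le> k'" using k2 unfolding k'_def by auto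
  have pcg: "phi_conj_grad m a (\<lambda>i. x i w) j zz = (1 / (A j * m)) *\<^sub>R (zz + m *\<^sub>R SX j w)" for j w zz
    unfolding phi_conj_grad_def A_def SX_def by simp
  have z0: "z 0 w = 0" if w: "w \<in> space M" for w
  proof -
    have "x 1 w = (A 0 / A 1) *\<^sub>R y 0 w + (a 1 / A 1) *\<^sub>R phi_conj_grad m a (\<lambda>i. x i w) 1 (z 0 w)"
      using x_def[of 1 w] w unfolding A_def by simp
    also have "\<dots> = (1 / (a 1 * m)) *\<^sub>R z 0 w + x 1 w"
      using a_pos[of 1] m0 unfolding A0 A1 pcg SX_def by (simp add: scaleR_add_right)
    finally have "(1 / (a 1 * m)) *\<^sub>R z 0 w = 0" by simp
    then show ?thesis using a_pos[of 1] m0 by simp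
  qed
  have zS: "z j w = - SW j w" if w: "w \<in> space M" for j w
  proof (induction j)
    case 0 show ?case using z0[OF w] unfolding SW_def by simp
  next
    case (Suc j)
    have "z (Suc j) w = z j w - a (Suc j) *\<^sub>R W (Suc j) w" using z_def[of "Suc j" w] w unfolding W_def by simp
    then show ?case using Suc unfolding SW_def by simp
  qed
  have Vpcg: "phi_conj_grad m a (\<lambda>i. x i w) j (z j w) = V j w" if "w \<in> space M" for j w
    unfolding pcg V_def zS[OF that] by (simp add: algebra_simps)
  have pcg_diff: "phi_conj_grad m a (\<lambda>i. x i w) j z1 - phi_conj_grad m a (\<lambda>i. x i w) j z2
      = (1 / (A j * m)) *\<^sub>R (z1 - z2)" for j w z1 z2
    unfolding pcg by (simp add: algebra_simps)
  have yrel: "y j w = x j w - ((a j / A j)\<^sup>2 / m) *\<^sub>R W j w" if j: "1 \<le> j" and w: "w \<in> space M" for j w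
  proof -
    have "y j w - x j w = (a j / A j) *\<^sub>R (phi_conj_grad m a (\<lambda>i. x i w) j (z j w) - phi_conj_grad m a (\<lambda>i. x i w) j (z (j - 1) w))"
      using x_def[OF j w] y_def[OF j w] unfolding A_def by (simp add: algebra_simps)
    also have "\<dots> = (a j / A j) *\<^sub>R ((1 / (A j * m)) *\<^sub>R (- a j *\<^sub>R W j w))"
      unfolding pcg_diff using z_def[OF j w] unfolding W_def by simp
    also have "\<dots> = - ((a j / A j)\<^sup>2 / m) *\<^sub>R W j w"
      by (simp add: power2_eq_square)
    finally show ?thesis by (simp add: algebra_simps)
  qed
  have Psi_min: "(INF u. Psi j w u) = Psi j w (V j w)" if j: "1 \<le> j" for j w
    unfolding Psi_def
    by (rule psi_inf) (use Apos[OF j] m0 in \<open>simp_all add: V_def SX_def SW_def A_def cumw_def\<close>)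
  have Psi_id: "Psi j w u = Psi j w (V j w) + m * A j / 2 * (norm (u - V j w))\<^sup>2" if j: "1 \<le> j" for j w u
    unfolding Psi_def V_def SX_def SW_def
    using psi_identity[where I="{1..j}" and a=a and m=m and W="\<lambda>i. W i w" and u=u and X="\<lambda>i. x i w"] Apos[OF j] m0 unfolding A_def cumw_def by simp
  have GfE: "Gf j w = f (y j w) - (Sl j w / A j + Psi j w (V j w) / A j)" if j: "1 \<le> j" for j w
  proof -
    have "Gf j w = f (y j w) - (1 / A j) * (Sl j w + (INF u. Psi j w u))"
      unfolding Gf_def Sl_def Psi_def A_def E_def W_def by simp
    then show ?thesis unfolding Psi_min[OF j] by (simp add: add_divide_distrib)
  qed
  have up: "f q \<le> f p + df p \<bullet> (q - p) + L / 2 * (norm (q - p))\<^sup>2" for p q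
    using sc unfolding strongly_convex_smooth_def by blast
  have lo: "f p + df p \<bullet> (q - p) \<le> f q" for p q
  proof -
    have "f p + df p \<bullet> (q - p) + m / 2 * (norm (q - p))\<^sup>2 \<le> f q"
      using sc unfolding strongly_convex_smooth_def by blast
    moreover have "0 \<le> m / 2 * (norm (q - p))\<^sup>2" using m0 by simp
    ultimately show ?thesis by linarith
  qed
  have pw: "Gf k w \<le> (1 - \<gamma>) * Gf (k - 1) w - mk * (norm (df (x k w)))\<^sup>2 + nk * (norm (E k w))\<^sup>2 + E k w \<bullet> H w"
    if w: "w \<in> space M" for w
  proof -
    define xk where "xk = x k w"
    define g where "g = df xk"
    define e where "e = E k w"
    define v0 where "v0 = V k' w"
    define d where "d = v0 - xk"
    define wv where "wv = V k w"
    define p where "p = phi_conj_grad m a (\<lambda>i. x i w) k (z k' w)"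
    have Wk: "W k w = g + e" unfolding W_def g_def e_def E_def xk_def by simp
    have Ak: "A k = A k' + a k" unfolding kk AS ..
    have Ak'p: "0 < A k'" using Apos[OF k1] .
    have akp: "0 < a k" using a_pos[of k] kk by simp
    have Akp: "0 < A k" using Ak Ak'p akp by simp
    have g1: "1 - \<gamma> = A k' / A k" unfolding \<gamma>_def using Ak Akp by (simp add: field_simps)
    have g0: "0 < \<gamma>" "\<gamma> < 1" unfolding \<gamma>_def using Ak Ak'p akp Akp by (simp_all add: field_simps)
    have SXk: "SX k w = SX k' w + a k *\<^sub>R xk" unfolding SX_def kk xk_def by simp
    have SWk: "SW k w = SW k' w + a k *\<^sub>R W k w" unfolding SW_def kk by simp
    have v0e: "m *\<^sub>R SX k' w - SW k' w = (A k' * m) *\<^sub>R v0"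
      unfolding v0_def V_def using Ak'p m0 by simp
    have pE: "p = (1 - \<gamma>) *\<^sub>R v0 + \<gamma> *\<^sub>R xk"
    proof -
      have "p = (1 / (A k * m)) *\<^sub>R (m *\<^sub>R SX k' w - SW k' w + (m * a k) *\<^sub>R xk)"
        unfolding p_def pcg zS[OF w] SXk by (simp add: algebra_simps)
      also have "\<dots> = (1 / (A k * m)) *\<^sub>R ((A k' * m) *\<^sub>R v0 + (m * a k) *\<^sub>R xk)" unfolding v0e ..
      also have "\<dots> = (A k' / A k) *\<^sub>R v0 + (a k / A k) *\<^sub>R xk"
        using m0 Akp by (simp add: scaleR_add_right)
      finally show ?thesis by (simp only: g1 \<gamma>_def[symmetric])
    qed
    have xE: "xk = (1 - \<gamma>) *\<^sub>R y k' w + \<gamma> *\<^sub>R p"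
    proof -
      have "xk = (A k' / A k) *\<^sub>R y k' w + (a k / A k) *\<^sub>R p"
        using x_def[of k w] w kk unfolding xk_def p_def A_def by simp
      then show ?thesis by (simp only: g1 \<gamma>_def[symmetric])
    qed
    have y0E: "y k' w - xk = - \<gamma> *\<^sub>R d"
    proof -
      have "(1 - \<gamma>) *\<^sub>R (y k' w - xk + \<gamma> *\<^sub>R d) = 0"
        using xE unfolding pE d_def by (simp add: algebra_simps)
      then have "y k' w - xk + \<gamma> *\<^sub>R d = 0" using g0 by simp
      then show ?thesis by (simp add: eq_neg_iff_add_eq_0)
    qed
    have wvE: "wv = p - (\<gamma> / m) *\<^sub>R (g + e)"
    proof -
      have "wv = phi_conj_grad m a (\<lambda>i. x i w) k (z k w)" unfolding wv_def Vpcg[OF w] ..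
      also have "\<dots> = p + (phi_conj_grad m a (\<lambda>i. x i w) k (z k w) - p)" by simp
      also have "phi_conj_grad m a (\<lambda>i. x i w) k (z k w) - p = (1 / (A k * m)) *\<^sub>R (z k w - z k' w)"
        unfolding p_def pcg_diff ..
      also have "z k w - z k' w = - a k *\<^sub>R (g + e)"
        using z_def[of k w] w kk Wk unfolding W_def by simp
      finally show ?thesis unfolding \<gamma>_def using m0 by (simp add: algebra_simps)
    qed
    have ykE: "y k w - xk = - (\<gamma>\<^sup>2 / m) *\<^sub>R (g + e)"
      using yrel[of k w] w kk Wk unfolding xk_def \<gamma>_def by simp
    have wv_v0: "wv - v0 = - \<gamma> *\<^sub>R d - (\<gamma> / m) *\<^sub>R (g + e)"
      unfolding wvE pE d_def by (simp add: algebra_simps)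
    have wv_x: "wv - xk = (1 - \<gamma>) *\<^sub>R d - (\<gamma> / m) *\<^sub>R (g + e)"
      unfolding wvE pE d_def by (simp add: algebra_simps)
    have Psik: "Psi k w u = Psi k' w u + a k * ((g + e) \<bullet> (u - xk) + m / 2 * (norm (u - xk))\<^sup>2)" for u
      unfolding Psi_def kk using Wk unfolding kk xk_def by simp
    have Slk: "Sl k w = Sl k' w + a k * (f xk - e \<bullet> (xs - xk))"
      unfolding Sl_def kk e_def xk_def kk by simp
    define P0 where "P0 = Psi k' w v0 / A k'"
    define P1 where "P1 = Psi k w wv / A k"
    define S0 where "S0 = Sl k' w / A k'"
    define S1 where "S1 = Sl k w / A k"
    have P1E: "P1 = (1 - \<gamma>) * P0 + (1 - \<gamma>) * (m / 2) * (norm (- \<gamma> *\<^sub>R d - (\<gamma> / m) *\<^sub>R (g + e)))\<^sup>2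
              + \<gamma> * ((g + e) \<bullet> ((1 - \<gamma>) *\<^sub>R d - (\<gamma> / m) *\<^sub>R (g + e))
                     + m / 2 * (norm ((1 - \<gamma>) *\<^sub>R d - (\<gamma> / m) *\<^sub>R (g + e)))\<^sup>2)"
    proof -
      have h: "Psi k w wv = Psi k' w v0 + m * A k' / 2 * (norm (- \<gamma> *\<^sub>R d - (\<gamma> / m) *\<^sub>R (g + e)))\<^sup>2
          + a k * ((g + e) \<bullet> ((1 - \<gamma>) *\<^sub>R d - (\<gamma> / m) *\<^sub>R (g + e))
                     + m / 2 * (norm ((1 - \<gamma>) *\<^sub>R d - (\<gamma> / m) *\<^sub>R (g + e)))\<^sup>2)"
        unfolding Psik wv_v0[symmetric] wv_x[symmetric] using Psi_id[OF k1, of w wv] unfolding v0_def by simp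
      have gen: "PP1 / A k = (1 - \<gamma>) * (PP0 / A k') + (1 - \<gamma>) * (m / 2) * n1 + \<gamma> * (i1 + m / 2 * n2)"
        if "PP1 = PP0 + m * A k' / 2 * n1 + a k * (i1 + m / 2 * n2)" for PP1 PP0 n1 i1 n2
        unfolding that g1 unfolding \<gamma>_def using Akp Ak'p by (simp add: field_simps)
      show ?thesis unfolding P1_def P0_def by (rule gen[OF h])
    qed
    have S1E: "S1 = (1 - \<gamma>) * S0 + \<gamma> * (f xk - e \<bullet> (xs - xk))"
    proof -
      have "Sl k w / A k = (A k' / A k) * (Sl k' w / A k') + (a k / A k) * (f xk - e \<bullet> (xs - xk))"
        unfolding Slk using Akp Ak'p by (simp add: field_simps)
      then show ?thesis unfolding S1_def S0_def by (simp only: g1 \<gamma>_def[symmetric])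
    qed
    have upk: "f (y k w) \<le> f xk + g \<bullet> (- (\<gamma>\<^sup>2 / m) *\<^sub>R (g + e)) + L / 2 * (norm (- (\<gamma>\<^sup>2 / m) *\<^sub>R (g + e)))\<^sup>2"
      using up[of "y k w" xk] unfolding ykE g_def .
    have lok: "f xk + g \<bullet> (- \<gamma> *\<^sub>R d) \<le> f (y k' w)"
      using lo[of xk "y k' w"] unfolding y0E g_def .
    have ka: "f (y k w) - (S1 + P1) \<le> (1 - \<gamma>) * (f (y k' w) - (S0 + P0))
           - (m / 2 - \<gamma>\<^sup>2 * L / 2) * \<gamma>\<^sup>2 / m\<^sup>2 * (norm g)\<^sup>2
           + (\<gamma>\<^sup>2 / m - (m / 2 - \<gamma>\<^sup>2 * L / 2) * \<gamma>\<^sup>2 / m\<^sup>2) * (norm e)\<^sup>2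
           + e \<bullet> (\<gamma> *\<^sub>R (xs - xk) - (\<gamma> * (1 - \<gamma>)) *\<^sub>R d + (L * \<gamma> ^ 4 / m\<^sup>2) *\<^sub>R g)"
      by (rule key_alg[OF m0 _ _ upk lok P1E S1E]) (use g0 in auto)
    have "Gf k w = f (y k w) - (S1 + P1)" using GfE[of k w] k2 unfolding S1_def P1_def wv_def by simp
    moreover have "Gf (k - 1) w = f (y k' w) - (S0 + P0)" using GfE[OF k1, of w] unfolding S0_def P0_def v0_def by (simp add: kk)
    ultimately show ?thesis using ka unfolding mk_def nk_def H_def g_def e_def d_def v0_def xk_def kk by simp
  qed
  have fcont: "continuous_on UNIV f"
    by (intro continuous_at_imp_continuous_on ballI has_derivative_continuous[OF grad])
  have dfcont: "continuous_on UNIV df"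
    by (intro continuous_at_imp_continuous_on ballI differentiable_imp_continuous_within twice)
  have subF: "subalgebra (F j) (F i)" if "i \<le> j" for i j
    unfolding subalgebra_def using filtration.space_F[OF filt] filtration.sets_F_mono[OF filt that] by auto
  have xF: "x i \<in> borel_measurable (F j)" if "1 \<le> i" "i \<le> j" for i j
    by (rule measurable_from_subalg[OF subF[OF that(2)] x_meas[OF that(1)]])
  have xM: "x i \<in> borel_measurable M" if "1 \<le> i" for i
    by (rule measurable_from_subalg[OF sub x_meas[OF that]])
  have EF: "E i \<in> borel_measurable (F j)" if "1 \<le> i" "Suc i \<le> j" for i j
  proof -
    have "(\<lambda>w. (w, x i w)) \<in> measurable (F (Suc i)) (F (Suc i) \<Otimes>\<^sub>M borel)"
      by (rule measurable_Pair[OF measurable_ident_sets[OF refl] xF]) (use that in auto)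
    from measurable_compose[OF this eps_meas[of i]]
    have "E i \<in> borel_measurable (F (Suc i))" unfolding E_def by simp
    then show ?thesis by (rule measurable_from_subalg[OF subF[OF that(2)]])
  qed
  have EM: "E i \<in> borel_measurable M" if "1 \<le> i" for i
    by (rule measurable_from_subalg[OF sub EF[OF that le_refl]])
  have dfF: "(\<lambda>w. df (x i w)) \<in> borel_measurable (F j)" if "1 \<le> i" "i \<le> j" for i j
    by (rule borel_measurable_continuous_on[OF dfcont xF[OF that]])
  have WF: "W i \<in> borel_measurable (F j)" if "1 \<le> i" "Suc i \<le> j" for i j
  proof -
    have "(\<lambda>w. df (x i w) + E i w) \<in> borel_measurable (F j)"
      using dfF[of i j] EF[of i j] that by (intro borel_measurable_add) auto
    then show ?thesis unfolding W_def E_def by simp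
  qed
  have Lx: "L2 M (x i)" if "1 \<le> i" for i by (rule L2I[OF xM[OF that] x_L2[OF that]])
  have LE: "L2 M (E i)" if "1 \<le> i" for i using EM[OF that] epsx_L2[OF that] unfolding E_def by (rule L2I)
  have Ldf: "L2 M (\<lambda>w. df (x i w))" if "1 \<le> i" for i
  proof (rule L2_bound[OF L2_diff[OF Lx[OF that] L2_const[OF fm]], where c = L])
    show "(\<lambda>w. df (x i w)) \<in> borel_measurable M" by (rule borel_measurable_continuous_on[OF dfcont xM[OF that]])
    show "norm (df (x i w)) \<le> L * norm (x i w - xs)" for w by (rule grad_bound[OF sc xmin L0])
  qed
  have LW: "L2 M (W i)" if "1 \<le> i" for i
    using L2_add[OF Ldf[OF that] LE[OF that]] unfolding W_def E_def by simp
  have LV: "L2 M (V j)" if "1 \<le> j" for j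
    unfolding V_def SX_def SW_def
    by (intro L2_scaleR L2_diff L2_sum[OF fm] Lx LW) auto
  have Ly: "L2 M (y j)" if j: "1 \<le> j" for j
  proof (rule L2I[OF _ y_L2[OF j]])
    have "(\<lambda>w. x j w - ((a j / A j)\<^sup>2 / m) *\<^sub>R W j w) \<in> borel_measurable M"
      using L2_meas[OF L2_diff[OF Lx[OF j] L2_scaleR[OF LW[OF j]]]] .
    then show "y j \<in> borel_measurable M" using yrel[OF j] by (subst measurable_cong) auto
  qed
  have intf: "integrable M (\<lambda>w. f (u w))" if u: "L2 M u" for u
  proof -
    have bi: "integrable M (\<lambda>w. \<bar>f xs\<bar> + \<bar>df xs \<bullet> (u w - xs)\<bar> + L / 2 * (norm (u w - xs))\<^sup>2)"
      using L2_inner[OF L2_const[OF fm] L2_diff[OF u L2_const[OF fm]], of "df xs" xs]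
            L2_int2[OF L2_diff[OF u L2_const[OF fm]], of xs]
      by (intro Bochner_Integration.integrable_add integrable_abs integrable_mult_right P.integrable_const) auto
    show ?thesis
    proof (rule Bochner_Integration.integrable_bound[OF bi])
      show "(\<lambda>w. f (u w)) \<in> borel_measurable M" by (rule borel_measurable_continuous_on[OF fcont L2_meas[OF u]])
      show "AE w in M. norm (f (u w)) \<le> norm (\<bar>f xs\<bar> + \<bar>df xs \<bullet> (u w - xs)\<bar> + L / 2 * (norm (u w - xs))\<^sup>2)"
      proof (rule AE_I2)
        fix w
        have "f (u w) \<le> f xs + df xs \<bullet> (u w - xs) + L / 2 * (norm (u w - xs))\<^sup>2" by (rule up)
        moreover have "f xs \<le> f (u w)" by (rule xmin)
        moreover have "0 \<le> L / 2 * (norm (u w - xs))\<^sup>2" using L0 by simp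
        ultimately show "norm (f (u w)) \<le> norm (\<bar>f xs\<bar> + \<bar>df xs \<bullet> (u w - xs)\<bar> + L / 2 * (norm (u w - xs))\<^sup>2)"
          by simp
      qed
    qed
  qed
  have intG: "integrable M (Gf j)" if j: "1 \<le> j" for j
  proof -
    have iS: "integrable M (\<lambda>w. Sl j w)"
      unfolding Sl_def
    proof (intro Bochner_Integration.integrable_sum integrable_mult_right Bochner_Integration.integrable_diff)
      fix i assume "i \<in> {1..j}" then have i: "1 \<le> i" by simp
      show "integrable M (\<lambda>w. f (x i w))" by (rule intf[OF Lx[OF i]])
      show "integrable M (\<lambda>w. E i w \<bullet> (xs - x i w))" by (rule L2_inner[OF LE[OF i] L2_diff[OF L2_const[OF fm] Lx[OF i]]])
    qed
    have iP: "integrable M (\<lambda>w. Psi j w (V j w))"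
      unfolding Psi_def
    proof (intro Bochner_Integration.integrable_sum integrable_mult_right Bochner_Integration.integrable_add)
      fix i assume "i \<in> {1..j}" then have i: "1 \<le> i" by simp
      show "integrable M (\<lambda>w. W i w \<bullet> (V j w - x i w))" by (rule L2_inner[OF LW[OF i] L2_diff[OF LV[OF j] Lx[OF i]]])
      show "integrable M (\<lambda>w. (norm (V j w - x i w))\<^sup>2)" by (rule L2_int2[OF L2_diff[OF LV[OF j] Lx[OF i]]])
    qed
    have "integrable M (\<lambda>w. f (y j w) - (Sl j w / A j + Psi j w (V j w) / A j))"
      using intf[OF Ly[OF j]] iS iP
      by (intro Bochner_Integration.integrable_diff Bochner_Integration.integrable_add integrable_divide_zero) auto
    moreover have "Gf j = (\<lambda>w. f (y j w) - (Sl j w / A j + Psi j w (V j w) / A j))"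
      by (rule ext) (rule GfE[OF j])
    ultimately show ?thesis by simp
  qed
  have HF: "H \<in> borel_measurable (F k)"
  proof -
    have "(\<lambda>w. \<gamma> *\<^sub>R (xs - x k w) - (\<gamma> * (1 - \<gamma>)) *\<^sub>R ((1 / (A (k - 1) * m)) *\<^sub>R
            (m *\<^sub>R (\<Sum>i = 1..k - 1. a i *\<^sub>R x i w) - (\<Sum>i = 1..k - 1. a i *\<^sub>R W i w)) - x k w)
          + (L * \<gamma> ^ 4 / m\<^sup>2) *\<^sub>R df (x k w)) \<in> borel_measurable (F k)"
      using k2 by (intro borel_measurable_add borel_measurable_diff borel_measurable_scaleR borel_measurable_sum
          borel_measurable_const xF WF dfF) auto
    then show ?thesis unfolding H_def V_def SX_def SW_def .
  qed
  have LH: "L2 M H"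
  proof -
    have "L2 M (\<lambda>w. \<gamma> *\<^sub>R (xs - x k w) - (\<gamma> * (1 - \<gamma>)) *\<^sub>R (V (k - 1) w - x k w) + (L * \<gamma> ^ 4 / m\<^sup>2) *\<^sub>R df (x k w))"
      using k2 k1 unfolding kk
      by (intro L2_add L2_diff L2_scaleR L2_const[OF fm] Lx LV Ldf) auto
    then show ?thesis unfolding H_def .
  qed
  have fms: "finite_measure_subalgebra M (F k)"
    unfolding finite_measure_subalgebra_def finite_measure_subalgebra_axioms_def using fm sub by auto
  interpret S: sigma_finite_subalgebra M "F k" by (rule finite_measure_subalgebra_is_sigma_finite[OF fms])
  have zero_i: "(\<integral>w. E k w $ i * H w $ i \<partial>M) = 0" for i
  proof -
    have k1': "1 \<le> k" using k2 by simp
    have AE0: "AE w in M. real_cond_exp M (F k) (\<lambda>w. E k w $ i) w = 0"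
      using eps_mean0[OF x_meas[OF k1'], of i] L2_integrable[OF fm LE[OF k1']] unfolding E_def by simp
    have HiF: "(\<lambda>w. H w $ i) \<in> borel_measurable (F k)"
      by (intro borel_measurable_continuous_on[where f="\<lambda>v. v $ i"] continuous_on_component continuous_on_id HF)
    have EiM: "(\<lambda>w. E k w $ i) \<in> borel_measurable M"
      by (intro borel_measurable_continuous_on[where f="\<lambda>v. v $ i"] continuous_on_component continuous_on_id EM k1')
    have iHE: "integrable M (\<lambda>w. H w $ i * E k w $ i)"
      using L2_inner[OF L2_nth[OF LH] L2_nth[OF LE[OF k1']], of i i] by simp
    have "(\<integral>w. H w $ i * real_cond_exp M (F k) (\<lambda>w. E k w $ i) w \<partial>M) = (\<integral>w. H w $ i * E k w $ i \<partial>M)"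
      by (rule S.real_cond_exp_intg(2)[OF iHE HiF EiM])
    moreover have "(\<integral>w. H w $ i * real_cond_exp M (F k) (\<lambda>w. E k w $ i) w \<partial>M) = (\<integral>w. 0 \<partial>M)"
    proof (rule integral_cong_AE)
      show "(\<lambda>w. H w $ i * real_cond_exp M (F k) (\<lambda>w. E k w $ i) w) \<in> borel_measurable M"
        using measurable_from_subalg[OF sub HiF] borel_measurable_cond_exp2
        by (intro borel_measurable_times) auto
      show "AE w in M. H w $ i * real_cond_exp M (F k) (\<lambda>w. E k w $ i) w = 0" using AE0 by eventually_elim simp
    qed simp
    ultimately show ?thesis by (simp add: mult.commute)
  qed
  have zero: "(\<integral>w. E k w \<bullet> H w \<partial>M) = 0"
  proof -
    have k1': "1 \<le> k" using k2 by simp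
    have "(\<integral>w. E k w \<bullet> H w \<partial>M) = (\<integral>w. (\<Sum>i\<in>UNIV. E k w $ i * H w $ i) \<partial>M)"
      unfolding inner_vec_def by simp
    also have "\<dots> = (\<Sum>i\<in>UNIV. (\<integral>w. E k w $ i * H w $ i \<partial>M))"
      by (rule Bochner_Integration.integral_sum) (use L2_inner[OF L2_nth[OF LE[OF k1']] L2_nth[OF LH]] in simp)
    also have "\<dots> = 0" using zero_i by simp
    finally show ?thesis .
  qed
  have k1': "1 \<le> k" using k2 by simp
  have iGk: "integrable M (Gf k)" by (rule intG[OF k1'])
  have iGk': "integrable M (Gf (k - 1))" using intG[OF k1] kk by simp
  have ig: "integrable M (\<lambda>w. (norm (df (x k w)))\<^sup>2)" by (rule L2_int2[OF Ldf[OF k1']])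
  have ie: "integrable M (\<lambda>w. (norm (E k w))\<^sup>2)" by (rule L2_int2[OF LE[OF k1']])
  have ieh: "integrable M (\<lambda>w. E k w \<bullet> H w)" by (rule L2_inner[OF LE[OF k1'] LH])
  have irhs: "integrable M (\<lambda>w. (1 - \<gamma>) * Gf (k - 1) w - mk * (norm (df (x k w)))\<^sup>2 + nk * (norm (E k w))\<^sup>2 + E k w \<bullet> H w)"
    using iGk' ig ie ieh by (intro Bochner_Integration.integrable_add Bochner_Integration.integrable_diff integrable_mult_right) auto
  have "(\<integral>w. Gf k w \<partial>M) \<le> (\<integral>w. (1 - \<gamma>) * Gf (k - 1) w - mk * (norm (df (x k w)))\<^sup>2 + nk * (norm (E k w))\<^sup>2 + E k w \<bullet> H w \<partial>M)"
    by (rule integral_mono[OF iGk irhs pw])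
  also have "\<dots> = (1 - \<gamma>) * (\<integral>w. Gf (k - 1) w \<partial>M) - mk * (\<integral>w. (norm (df (x k w)))\<^sup>2 \<partial>M) + nk * (\<integral>w. (norm (E k w))\<^sup>2 \<partial>M) + (\<integral>w. E k w \<bullet> H w \<partial>M)"
    using iGk' ig ie ieh by (simp add: Bochner_Integration.integral_add Bochner_Integration.integral_diff)
  finally have fin: "(\<integral>w. Gf k w \<partial>M) \<le> (1 - \<gamma>) * (\<integral>w. Gf (k - 1) w \<partial>M) - mk * (\<integral>w. (norm (df (x k w)))\<^sup>2 \<partial>M) + nk * (\<integral>w. (norm (E k w))\<^sup>2 \<partial>M)"
    unfolding zero by simp
  show ?thesis using fin unfolding Let_def Gf_def mk_def nk_def \<gamma>_def A_def E_def by simp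
qed

end
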